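(* Let $\Omega$ be a set, $\Phi$ the family of coherent sets of gambles on $\Omega$ together with $\mathcal{L}(\Omega)$, and $At(\Phi)$ its set of atoms. For all $\mathcal{D}_1,\mathcal{D}_2,\mathcal{D}\in\Phi$ and all $x\in Q$: (1) $At(\mathcal{D}_1\cdot\mathcal{D}_2)=At(\mathcal{D}_1)\cap At(\mathcal{D}_2)$; (2) $At(\mathcal{L}(\Omega))=\emptyset$ and $At(\mathcal{L}^+(\Omega))=At(\Phi)$; (3) $At(\epsilon_x(\mathcal{D}))=\sigma_x(At(\mathcal{D}))$.
   Context: A gamble is a bounded function $\Omega\to\mathbb{R}$; $\mathcal{L}(\Omega)$ is the set of gambles, $\mathcal{L}^+(\Omega)=\{f:f\ge0,f\ne0\}$. A set $\mathcal{D}\subseteq\mathcal{L}(\Omega)$ is coherent if $\mathcal{L}^+(\Omega)\subseteq\mathcal{D}$, $0\notin\mathcal{D}$, and $\mathcal{D}$ is closed under addition and under multiplication by positive reals. $\Phi$ = coherent sets $\cup\{\mathcal{L}(\Omega)\}$; $\mathcal{C}(\mathcal{K})=\bigcap\{\mathcal{D}\in\Phi:\mathcal{K}\subseteq\mathcal{D}\}$; combination $\mathcal{D}_1\cdot\mathcal{D}_2=\mathcal{C}(\mathcal{D}_1\cup\mathcal{D}_2)$. $Q$ is an index set, each $x\in Q$ corresponding to a partition $\mathcal{P}_x$ of $\Omega$, with $\{\mathcal{P}_x:x\in Q\}$ closed under join (partition into nonempty intersections of blocks). $\mathcal{L}_x$ is the set of gambles constant on each block of $\mathcal{P}_x$ and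 $\epsilon_x(\mathcal{D})=\mathcal{C}(\mathcal{D}\cap\mathcal{L}_x)$. Atoms are the maximal coherent sets; $At(\Phi)$ is the set of atoms and $At(\mathcal{D})=\{M\in At(\Phi):\mathcal{D}\subseteq M\}$. For $x\in Q$, the sets $At(\epsilon_x(M))$, $M\in At(\Phi)$, form a partition of $At(\Phi)$; $M\equiv_x M'$ means $M,M'$ lie in the same block of it. For $A\subseteq At(\Phi)$, $\sigma_x(A)=\{M\in At(\Phi):\exists M'\in A,\ M\equiv_x M'\}$. *)

theory Defs
  imports Complex_Main
begin

(* Omega is modelled as the (arbitrary) type 'w. *)

definition gambles :: "('w \<Rightarrow> real) set" where
  "gambles = {f. \<exists>B. \<forall>w. \<bar>f w\<bar> \<le> B}"

definition pos_gambles :: "('w \<Rightarrow> real) set" where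
  "pos_gambles = {f \<in> gambles. (\<forall>w. f w \<ge> 0) \<and> f \<noteq> (\<lambda>w. 0)}"

definition coherent :: "('w \<Rightarrow> real) set \<Rightarrow> bool" where
  "coherent D \<longleftrightarrow> D \<subseteq> gambles \<and> pos_gambles \<subseteq> D \<and> (\<lambda>w. 0) \<notin> D
     \<and> (\<forall>f\<in>D. \<forall>g\<in>D. (\<lambda>w. f w + g w) \<in> D)
     \<and> (\<forall>f\<in>D. \<forall>c::real. c > 0 \<longrightarrow> (\<lambda>w. c * f w) \<in> D)"

definition Phi :: "('w \<Rightarrow> real) set set" where
  "Phi = {D. coherent D} \<union> {gambles}"

definition closure_C :: "('w \<Rightarrow> real) set \<Rightarrow> ('w \<Rightarrow> real) set" where
  "closure_C K = \<Inter>{D \<in> Phi. K \<subseteq> D}"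

definition combine :: "('w \<Rightarrow> real) set \<Rightarrow> ('w \<Rightarrow> real) set \<Rightarrow> ('w \<Rightarrow> real) set" where
  "combine D1 D2 = closure_C (D1 \<union> D2)"

definition atoms :: "('w \<Rightarrow> real) set set" where
  "atoms = {M. coherent M \<and> (\<forall>D. coherent D \<and> M \<subseteq> D \<longrightarrow> D = M)}"

definition At :: "('w \<Rightarrow> real) set \<Rightarrow> ('w \<Rightarrow> real) set set" where
  "At D = {M \<in> atoms. D \<subseteq> M}"

definition is_partition :: "'w set set \<Rightarrow> bool" where
  "is_partition P \<longleftrightarrow> (\<forall>B\<in>P. B \<noteq> {}) \<and> \<Union>P = UNIV
     \<and> (\<forall>B\<in>P. \<forall>B'\<in>P. B \<noteq> B' \<longrightarrow> B \<inter> B' = {})"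

definition part_join :: "'w set set \<Rightarrow> 'w set set \<Rightarrow> 'w set set" where
  "part_join P1 P2 = {B \<inter> B' | B B'. B \<in> P1 \<and> B' \<in> P2 \<and> B \<inter> B' \<noteq> {}}"

(* L_x : gambles constant on each block of the partition P *)
definition meas_gambles :: "'w set set \<Rightarrow> ('w \<Rightarrow> real) set" where
  "meas_gambles P = {f \<in> gambles. \<forall>B\<in>P. \<forall>u\<in>B. \<forall>v\<in>B. f u = f v}"

definition eps_x :: "'w set set \<Rightarrow> ('w \<Rightarrow> real) set \<Rightarrow> ('w \<Rightarrow> real) set" where
  "eps_x P D = closure_C (D \<inter> meas_gambles P)"

definition equiv_x :: "'w set set \<Rightarrow> ('w \<Rightarrow> real) set \<Rightarrow> ('w \<Rightarrow> real) set \<Rightarrow> bool" where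
  "equiv_x P M M' \<longleftrightarrow> (\<exists>N\<in>atoms. M \<in> At (eps_x P N) \<and> M' \<in> At (eps_x P N))"

definition sigma_x :: "'w set set \<Rightarrow> ('w \<Rightarrow> real) set set \<Rightarrow> ('w \<Rightarrow> real) set set" where
  "sigma_x P A = {M \<in> atoms. \<exists>M'\<in>A. equiv_x P M M'}"

end

theory Submission
  imports Defs
begin

lemma gambles_add: "f \<in> gambles \<Longrightarrow> g \<in> gambles \<Longrightarrow> (\<lambda>w. f w + g w) \<in> gambles"
proof -
  assume "f \<in> gambles" "g \<in> gambles"
  then obtain B1 B2 where "\<forall>w. \<bar>f w\<bar> \<le> B1" "\<forall>w. \<bar>g w\<bar> \<le> B2" by (auto simp: gambles_def)
  then have "\<forall>w. \<bar>f w + g w\<bar> \<le> B1 + B2"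
    by (metis abs_triangle_ineq add_mono order_trans)
  then show ?thesis by (auto simp: gambles_def)
qed

lemma gambles_scale: "f \<in> gambles \<Longrightarrow> (\<lambda>w. c * f w) \<in> gambles"
proof -
  assume "f \<in> gambles"
  then obtain B where B: "\<forall>w. \<bar>f w\<bar> \<le> B" by (auto simp: gambles_def)
  have "\<forall>w. \<bar>c * f w\<bar> \<le> \<bar>c\<bar> * B"
    using B by (simp add: abs_mult mult_left_mono)
  then show ?thesis by (auto simp: gambles_def)
qed

lemma gambles_zero: "(\<lambda>w. 0) \<in> gambles"
  by (auto simp: gambles_def)

lemma coh_scale: "coherent D \<Longrightarrow> f \<in> D \<Longrightarrow> c > 0 \<Longrightarrow> (\<lambda>w. c * f w) \<in> D"
  unfolding coherent_def by blast
lemma coh_add: "coherent D \<Longrightarrow> f \<in> D \<Longrightarrow> g \<in> D \<Longrightarrow> (\<lambda>w. f w + g w) \<in> D"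
  unfolding coherent_def by blast
lemma coh_zero: "coherent D \<Longrightarrow> (\<lambda>w. 0) \<notin> D"
  unfolding coherent_def by blast
lemma coh_gambles: "coherent D \<Longrightarrow> D \<subseteq> gambles"
  unfolding coherent_def by blast
lemma coh_pos: "coherent D \<Longrightarrow> pos_gambles \<subseteq> D"
  unfolding coherent_def by blast
lemma atoms_max: "M \<in> atoms \<Longrightarrow> coherent D \<Longrightarrow> M \<subseteq> D \<Longrightarrow> D = M"
  unfolding atoms_def by blast
lemma atoms_coh: "M \<in> atoms \<Longrightarrow> coherent M"
  unfolding atoms_def by blast

definition pcone :: "('w \<Rightarrow> real) set \<Rightarrow> bool" where
  "pcone X \<longleftrightarrow> X \<subseteq> gambles \<and> (\<lambda>w. 0) \<notin> X
     \<and> (\<forall>f\<in>X. \<forall>g\<in>X. (\<lambda>w. f w + g w) \<in> X)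
     \<and> (\<forall>f\<in>X. \<forall>c::real. c > 0 \<longrightarrow> (\<lambda>w. c * f w) \<in> X)"

lemma coherent_pcone: "coherent D \<Longrightarrow> pcone D"
  by (simp add: coherent_def pcone_def)

lemma pcone_zero_sum:
  assumes "pcone X" "a \<in> X \<or> a = (\<lambda>w. 0)" "b \<in> X \<or> b = (\<lambda>w. 0)"
    "(\<lambda>w. a w + b w) = (\<lambda>w. 0)"
  shows "a = (\<lambda>w. 0) \<and> b = (\<lambda>w. 0)"
  using assms unfolding pcone_def
  by (metis (no_types, lifting) add.right_neutral add_0)

lemma pcone_sum0:
  assumes "pcone X" "a \<in> X \<or> a = (\<lambda>w. 0)" "b \<in> X \<or> b = (\<lambda>w. 0)"
  shows "(\<lambda>w. a w + b w) \<in> X \<or> (\<lambda>w. a w + b w) = (\<lambda>w. 0)"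
  using assms unfolding pcone_def by auto

definition ext :: "('w \<Rightarrow> real) set \<Rightarrow> ('w \<Rightarrow> real) set \<Rightarrow> ('w \<Rightarrow> real) set" where
  "ext A B = {h. h \<noteq> (\<lambda>w. 0) \<and> (\<exists>a b. (a \<in> A \<or> a = (\<lambda>w. 0)) \<and> (b \<in> B \<or> b = (\<lambda>w. 0))
       \<and> h = (\<lambda>w. a w + b w))}"

lemma ext_sub1:
  assumes "pcone A" shows "A \<subseteq> ext A B"
proof
  fix x assume x: "x \<in> A"
  then have "x \<noteq> (\<lambda>w. 0)" "x = (\<lambda>w. x w + (\<lambda>w. 0) w)" using assms unfolding pcone_def by auto
  then show "x \<in> ext A B" unfolding ext_def using x by blast
qed

lemma ext_sub2:
  assumes "pcone B" shows "B \<subseteq> ext A B"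
proof
  fix x assume x: "x \<in> B"
  then have "x \<noteq> (\<lambda>w. 0)" "x = (\<lambda>w. (\<lambda>w. 0) w + x w)" using assms unfolding pcone_def by auto
  then show "x \<in> ext A B" unfolding ext_def using x by blast
qed

lemmas ext_sub = ext_sub1 ext_sub2

lemma ext_coherent:
  assumes A: "coherent A" and B: "pcone B"
    and disj: "\<And>a b. a \<in> A \<Longrightarrow> b \<in> B \<Longrightarrow> (\<lambda>w. a w + b w) \<noteq> (\<lambda>w. 0)"
  shows "coherent (ext A B)"
proof -
  have pA: "pcone A" using A by (rule coherent_pcone)
  have key: "a = (\<lambda>w. 0) \<and> b = (\<lambda>w. 0)"
    if "a \<in> A \<or> a = (\<lambda>w. 0)" "b \<in> B \<or> b = (\<lambda>w. 0)" "(\<lambda>w. a w + b w) = (\<lambda>w. 0)" for a b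
  proof -
    have "\<not> (a \<in> A \<and> b \<in> B)" using disj that(3) by blast
    moreover have "a \<notin> A \<or> b \<noteq> (\<lambda>w. 0)" using that(3) pA unfolding pcone_def by auto
    moreover have "b \<notin> B \<or> a \<noteq> (\<lambda>w. 0)" using that(3) B unfolding pcone_def by auto
    ultimately show ?thesis using that(1,2) by blast
  qed
  show ?thesis
    unfolding coherent_def
  proof (intro conjI ballI allI impI)
    show "ext A B \<subseteq> gambles"
    proof
      fix h assume "h \<in> ext A B"
      then obtain a b where ab: "a \<in> A \<or> a = (\<lambda>w. 0)" "b \<in> B \<or> b = (\<lambda>w. 0)" "h = (\<lambda>w. a w + b w)"
        unfolding ext_def by blast
      have "a \<in> gambles" using ab(1) pA gambles_zero unfolding pcone_def by auto
      moreover have "b \<in> gambles" using ab(2) B gambles_zero unfolding pcone_def by auto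
      ultimately show "h \<in> gambles" using ab(3) gambles_add by simp
    qed
    show "pos_gambles \<subseteq> ext A B" using A ext_sub(1)[OF pA] unfolding coherent_def by blast
    show "(\<lambda>w. 0) \<notin> ext A B" unfolding ext_def by blast
  next
    fix f g assume f: "f \<in> ext A B" and g: "g \<in> ext A B"
    from f obtain a1 b1 where ab1: "a1 \<in> A \<or> a1 = (\<lambda>w. 0)" "b1 \<in> B \<or> b1 = (\<lambda>w. 0)" "f = (\<lambda>w. a1 w + b1 w)"
      "f \<noteq> (\<lambda>w. 0)"
      unfolding ext_def by blast
    from g obtain a2 b2 where ab2: "a2 \<in> A \<or> a2 = (\<lambda>w. 0)" "b2 \<in> B \<or> b2 = (\<lambda>w. 0)" "g = (\<lambda>w. a2 w + b2 w)"
      unfolding ext_def by blast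
    define a where "a = (\<lambda>w. a1 w + a2 w)"
    define b where "b = (\<lambda>w. b1 w + b2 w)"
    have a: "a \<in> A \<or> a = (\<lambda>w. 0)" unfolding a_def by (rule pcone_sum0[OF pA ab1(1) ab2(1)])
    have b: "b \<in> B \<or> b = (\<lambda>w. 0)" unfolding b_def by (rule pcone_sum0[OF B ab1(2) ab2(2)])
    have eq: "(\<lambda>w. f w + g w) = (\<lambda>w. a w + b w)"
      unfolding a_def b_def ab1(3) ab2(3) by (auto simp: fun_eq_iff)
    have nz: "(\<lambda>w. f w + g w) \<noteq> (\<lambda>w. 0)"
    proof
      assume "(\<lambda>w. f w + g w) = (\<lambda>w. 0)"
      then have "a = (\<lambda>w. 0) \<and> b = (\<lambda>w. 0)" using key[OF a b] eq by simp
      then have "a1 = (\<lambda>w. 0) \<and> b1 = (\<lambda>w. 0)"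
        using pcone_zero_sum[OF pA ab1(1) ab2(1)] pcone_zero_sum[OF B ab1(2) ab2(2)]
        unfolding a_def b_def by blast
      then show False using ab1(3,4) by simp
    qed
    show "(\<lambda>w. f w + g w) \<in> ext A B"
      unfolding ext_def using a b eq nz by blast
  next
    fix f and c :: real assume f: "f \<in> ext A B" and c: "c > 0"
    from f obtain a1 b1 where ab1: "a1 \<in> A \<or> a1 = (\<lambda>w. 0)" "b1 \<in> B \<or> b1 = (\<lambda>w. 0)" "f = (\<lambda>w. a1 w + b1 w)"
      "f \<noteq> (\<lambda>w. 0)"
      unfolding ext_def by blast
    have a: "(\<lambda>w. c * a1 w) \<in> A \<or> (\<lambda>w. c * a1 w) = (\<lambda>w. 0)"
      using ab1(1) pA c unfolding pcone_def by auto
    have b: "(\<lambda>w. c * b1 w) \<in> B \<or> (\<lambda>w. c * b1 w) = (\<lambda>w. 0)"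
      using ab1(2) B c unfolding pcone_def by auto
    have eq: "(\<lambda>w. c * f w) = (\<lambda>w. c * a1 w + c * b1 w)"
      unfolding ab1(3) by (auto simp: fun_eq_iff algebra_simps)
    have nz: "(\<lambda>w. c * f w) \<noteq> (\<lambda>w. 0)"
      using ab1(4) c by (auto simp: fun_eq_iff)
    show "(\<lambda>w. c * f w) \<in> ext A B"
      unfolding ext_def using a b eq nz by blast
  qed
qed

lemma chain_coherent:
  assumes ne: "C \<noteq> {}" and coh: "\<And>X. X \<in> C \<Longrightarrow> coherent X"
    and tot: "\<And>X Y. X \<in> C \<Longrightarrow> Y \<in> C \<Longrightarrow> X \<subseteq> Y \<or> Y \<subseteq> X"
  shows "coherent (\<Union>C)"
proof -
  have c1: "X \<subseteq> gambles" if "X \<in> C" for X using coh[OF that] by (simp add: coherent_def)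
  have c2: "pos_gambles \<subseteq> X" if "X \<in> C" for X using coh[OF that] by (simp add: coherent_def)
  have c3: "(\<lambda>w. 0) \<notin> X" if "X \<in> C" for X using coh[OF that] by (simp add: coherent_def)
  have c4: "(\<lambda>w. f w + g w) \<in> X" if "X \<in> C" "f \<in> X" "g \<in> X" for X f g
    using coh[OF that(1)] that(2,3) unfolding coherent_def by blast
  have c5: "(\<lambda>w. c * f w) \<in> X" if "X \<in> C" "f \<in> X" "c > 0" for X f c
    using coh[OF that(1)] that(2,3) unfolding coherent_def by blast
  obtain E0 where E0: "E0 \<in> C" using ne by blast
  show ?thesis
    unfolding coherent_def
  proof (intro conjI ballI allI impI)
    show "\<Union>C \<subseteq> gambles" using c1 by blast
    show "pos_gambles \<subseteq> \<Union>C" using c2 E0 by blast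
    show "(\<lambda>w. 0) \<notin> \<Union>C" using c3 by blast
  next
    fix f g assume "f \<in> \<Union>C" "g \<in> \<Union>C"
    then obtain X Y where XY: "X \<in> C" "Y \<in> C" "f \<in> X" "g \<in> Y" by blast
    show "(\<lambda>w. f w + g w) \<in> \<Union>C"
    proof (cases "X \<subseteq> Y")
      case True
      then have "(\<lambda>w. f w + g w) \<in> Y" using XY c4 by blast
      then show ?thesis using XY by blast
    next
      case False
      then have "Y \<subseteq> X" using tot XY by blast
      then have "(\<lambda>w. f w + g w) \<in> X" using XY c4 by blast
      then show ?thesis using XY by blast
    qed
  next
    fix f and c :: real assume "f \<in> \<Union>C" "c > 0"
    then obtain X where "X \<in> C" "f \<in> X" by blast
    then show "(\<lambda>w. c * f w) \<in> \<Union>C" using c5 \<open>c > 0\<close> by blast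
  qed
qed

lemma zorn_atom:
  assumes "coherent D"
  shows "\<exists>M\<in>atoms. D \<subseteq> M"
proof -
  let ?A = "{E. coherent E \<and> D \<subseteq> E}"
  have "\<exists>M\<in>?A. \<forall>X\<in>?A. M \<subseteq> X \<longrightarrow> X = M"
  proof (rule subset_Zorn_nonempty)
    show "?A \<noteq> {}" using assms by blast
  next
    fix C assume ne: "C \<noteq> {}" and ch: "subset.chain ?A C"
    have CA: "C \<subseteq> ?A" using ch by (simp add: subset_chain_def)
    have tot: "X \<subseteq> Y \<or> Y \<subseteq> X" if "X \<in> C" "Y \<in> C" for X Y
      using ch that unfolding subset_chain_def by blast
    have coh: "coherent X" if "X \<in> C" for X using CA that by blast
    have "coherent (\<Union>C)"
      by (rule chain_coherent[OF ne coh tot])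
    moreover have "D \<subseteq> \<Union>C"
    proof -
      obtain E0 where "E0 \<in> C" using ne by blast
      then have "D \<subseteq> E0" using CA by blast
      then show ?thesis using \<open>E0 \<in> C\<close> by blast
    qed
    ultimately show "\<Union>C \<in> ?A" by blast
  qed
  then obtain M where M: "coherent M" "D \<subseteq> M" and mx: "\<forall>X\<in>?A. M \<subseteq> X \<longrightarrow> X = M"
    by blast
  have "\<forall>X. coherent X \<and> M \<subseteq> X \<longrightarrow> X = M"
  proof (intro allI impI)
    fix X assume X: "coherent X \<and> M \<subseteq> X"
    then have "X \<in> ?A" using M(2) by blast
    then show "X = M" using mx X by blast
  qed
  then have "M \<in> atoms" unfolding atoms_def using M(1) by blast
  then show ?thesis using M by blast
qed

lemma atom_max:
  assumes M: "M \<in> atoms" and f: "f \<in> gambles" "f \<noteq> (\<lambda>w. 0)" "f \<notin> M"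
  shows "(\<lambda>w. - f w) \<in> M"
proof -
  have cM: "coherent M" using M by (rule atoms_coh)
  let ?B = "{h. \<exists>c>0. h = (\<lambda>w. c * (- f w))}"
  have pB: "pcone ?B"
    unfolding pcone_def
  proof (intro conjI ballI allI impI)
    show "?B \<subseteq> gambles" using gambles_scale[OF gambles_scale[OF f(1), of "-1"]] by auto
    show "(\<lambda>w. 0) \<notin> ?B" using f(2) by (auto simp: fun_eq_iff)
  next
    fix g h assume "g \<in> ?B" "h \<in> ?B"
    then obtain c d where "c > 0" "d > 0" "g = (\<lambda>w. c * (- f w))" "h = (\<lambda>w. d * (- f w))" by blast
    then show "(\<lambda>w. g w + h w) \<in> ?B"
      by (auto intro!: exI[of _ "c + d"] simp: fun_eq_iff algebra_simps)
  next
    fix g and c :: real assume "g \<in> ?B" "c > 0"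
    then obtain d where "d > 0" "g = (\<lambda>w. d * (- f w))" by blast
    with \<open>c > 0\<close> show "(\<lambda>w. c * g w) \<in> ?B"
      by (auto intro!: exI[of _ "c * d"] simp: fun_eq_iff algebra_simps)
  qed
  have disj: "(\<lambda>w. a w + b w) \<noteq> (\<lambda>w. 0)" if ab: "a \<in> M" "b \<in> ?B" for a b
  proof
    assume z: "(\<lambda>w. a w + b w) = (\<lambda>w. 0)"
    obtain c where c: "c > 0" "b = (\<lambda>w. c * (- f w))" using ab(2) by blast
    have "f = (\<lambda>w. (1/c) * a w)"
    proof
      fix w have "a w + b w = 0" using fun_cong[OF z, of w] by simp
      then have "a w + c * (- f w) = 0" using c(2) by simp
      then show "f w = (1/c) * a w" using c(1) by (simp add: field_simps)
    qed
    moreover have "(\<lambda>w. (1/c) * a w) \<in> M"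
    proof -
      have "0 < 1/c" using c(1) by simp
      then show ?thesis using coh_scale[OF cM ab(1)] by blast
    qed
    ultimately show False using f(3) by simp
  qed
  have ce: "coherent (ext M ?B)" by (rule ext_coherent[OF cM pB disj])
  have "M \<subseteq> ext M ?B" by (rule ext_sub(1)[OF coherent_pcone[OF cM]])
  then have "ext M ?B = M" using atoms_max[OF M ce] by blast
  moreover have "(\<lambda>w. - f w) \<in> ?B" by (auto intro!: exI[of _ 1])
  ultimately show ?thesis using ext_sub(2)[OF pB] by blast
qed

lemma atom_Phi: "M \<in> atoms \<Longrightarrow> M \<in> Phi"
  unfolding Phi_def using atoms_coh by blast

lemma At_closure: "At (closure_C K) = {M \<in> atoms. K \<subseteq> M}"
  unfolding At_def closure_C_def using atom_Phi by blast

lemma meas_I: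
  assumes "h \<in> gambles" "\<And>B u v. B \<in> P \<Longrightarrow> u \<in> B \<Longrightarrow> v \<in> B \<Longrightarrow> h u = h v"
  shows "h \<in> meas_gambles P"
  using assms unfolding meas_gambles_def by blast

lemma meas_D: "h \<in> meas_gambles P \<Longrightarrow> B \<in> P \<Longrightarrow> u \<in> B \<Longrightarrow> v \<in> B \<Longrightarrow> h u = h v"
  unfolding meas_gambles_def by blast

lemma meas_G: "h \<in> meas_gambles P \<Longrightarrow> h \<in> gambles"
  unfolding meas_gambles_def by blast

lemma meas_neg:
  assumes f: "f \<in> meas_gambles P" shows "(\<lambda>w. - f w) \<in> meas_gambles P"
proof (rule meas_I)
  have "(\<lambda>w. (-1) * f w) \<in> gambles" by (rule gambles_scale[OF meas_G[OF f]])
  then show "(\<lambda>w. - f w) \<in> gambles" by simp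
next
  fix B u v assume "B \<in> P" "u \<in> B" "v \<in> B"
  then have "f u = f v" by (rule meas_D[OF f])
  then show "- f u = - f v" by (rule arg_cong)
qed

lemma meas_add:
  assumes f: "f \<in> meas_gambles P" and g: "g \<in> meas_gambles P"
  shows "(\<lambda>w. f w + g w) \<in> meas_gambles P"
proof (rule meas_I)
  show "(\<lambda>w. f w + g w) \<in> gambles" by (rule gambles_add[OF meas_G[OF f] meas_G[OF g]])
next
  fix B u v assume "B \<in> P" "u \<in> B" "v \<in> B"
  then have "f u = f v" "g u = g v" by (rule meas_D[OF f], rule meas_D[OF g])
  then show "f u + g u = f v + g v" by (simp only:)
qed

lemma meas_scale:
  assumes f: "f \<in> meas_gambles P"
  shows "(\<lambda>w. c * f w) \<in> meas_gambles P"
proof (rule meas_I)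
  show "(\<lambda>w. c * f w) \<in> gambles" by (rule gambles_scale[OF meas_G[OF f]])
next
  fix B u v assume "B \<in> P" "u \<in> B" "v \<in> B"
  then have "f u = f v" by (rule meas_D[OF f])
  then show "c * f u = c * f v" by (simp only:)
qed

lemma meas_pcone:
  assumes cM: "coherent M" shows "pcone (M \<inter> meas_gambles P)"
  unfolding pcone_def
proof (intro conjI ballI allI impI)
  show "M \<inter> meas_gambles P \<subseteq> gambles" using coh_gambles[OF cM] by blast
  show "(\<lambda>w. 0) \<notin> M \<inter> meas_gambles P" using coh_zero[OF cM] by blast
next
  fix f g assume f: "f \<in> M \<inter> meas_gambles P" and g: "g \<in> M \<inter> meas_gambles P"
  have "(\<lambda>w. f w + g w) \<in> M" using coh_add[OF cM] f g by blast
  moreover have "(\<lambda>w. f w + g w) \<in> meas_gambles P" using meas_add f g by blast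
  ultimately show "(\<lambda>w. f w + g w) \<in> M \<inter> meas_gambles P" by (rule IntI)
next
  fix f and c :: real assume f: "f \<in> M \<inter> meas_gambles P" and c: "c > 0"
  have "(\<lambda>w. c * f w) \<in> M" using coh_scale[OF cM] f c by blast
  moreover have "(\<lambda>w. c * f w) \<in> meas_gambles P" using meas_scale f by blast
  ultimately show "(\<lambda>w. c * f w) \<in> M \<inter> meas_gambles P" by (rule IntI)
qed

theorem theorem5:
  fixes Part :: "'q \<Rightarrow> 'w set set"
  assumes parts: "\<And>x. is_partition (Part x)"
    and join_closed: "\<And>x y. \<exists>z. Part z = part_join (Part x) (Part y)"
  shows "(\<forall>D1\<in>(Phi :: ('w \<Rightarrow> real) set set). \<forall>D2\<in>Phi. At (combine D1 D2) = At D1 \<inter> At D2)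
    \<and> At (gambles :: ('w \<Rightarrow> real) set) = {}
    \<and> At (pos_gambles :: ('w \<Rightarrow> real) set) = atoms
    \<and> (\<forall>D\<in>Phi. \<forall>x. At (eps_x (Part x) D) = sigma_x (Part x) (At D))"
proof (intro conjI ballI allI)
  fix D1 D2 :: "('w \<Rightarrow> real) set"
  show "At (combine D1 D2) = At D1 \<inter> At D2"
    unfolding combine_def At_closure by (auto simp: At_def)
next
  show "At (gambles :: ('w \<Rightarrow> real) set) = {}"
    unfolding At_def using gambles_zero atoms_coh coh_zero by blast
next
  show "At (pos_gambles :: ('w \<Rightarrow> real) set) = atoms"
    unfolding At_def using atoms_coh coh_pos by blast
next
  fix D :: "('w \<Rightarrow> real) set" and x
  assume DPhi: "D \<in> Phi"
  let ?L = "meas_gambles (Part x)"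
  have sig: "sigma_x (Part x) (At D) =
     {M \<in> atoms. \<exists>M'\<in>atoms. D \<subseteq> M' \<and> (\<exists>N\<in>atoms. N \<inter> ?L \<subseteq> M \<and> N \<inter> ?L \<subseteq> M')}"
    unfolding sigma_x_def equiv_x_def eps_x_def At_closure by (auto simp: At_def)
  have lhs: "At (eps_x (Part x) D) = {M \<in> atoms. D \<inter> ?L \<subseteq> M}"
    unfolding eps_x_def At_closure by simp
  show "At (eps_x (Part x) D) = sigma_x (Part x) (At D)"
    unfolding lhs sig
  proof (rule equalityI; rule subsetI)
    fix M assume "M \<in> {M \<in> atoms. D \<inter> ?L \<subseteq> M}"
    then have M: "M \<in> atoms" "D \<inter> ?L \<subseteq> M" by auto
    have cM: "coherent M" using M(1) by (rule atoms_coh)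
    have cD: "coherent D"
    proof -
      have "D \<noteq> gambles"
      proof
        assume "D = gambles"
        then have "(\<lambda>w. 0) \<in> D \<inter> ?L" using gambles_zero meas_I[of "\<lambda>w. 0"] by blast
        then show False using M(2) coh_zero[OF cM] by blast
      qed
      then show ?thesis using DPhi unfolding Phi_def by blast
    qed
    have pL: "pcone (M \<inter> ?L)" by (rule meas_pcone[OF cM])
    have disj: "(\<lambda>w. a w + b w) \<noteq> (\<lambda>w. 0)" if "a \<in> D" "b \<in> M \<inter> ?L" for a b
    proof
      assume z: "(\<lambda>w. a w + b w) = (\<lambda>w. 0)"
      then have "a = (\<lambda>w. - b w)" by (simp add: fun_eq_iff eq_neg_iff_add_eq_0)
      then have "a \<in> ?L" using meas_neg[of b] that(2) by blast
      then have "a \<in> M" using M(2) that(1) by blast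
      then have "(\<lambda>w. a w + b w) \<in> M" using coh_add[OF cM] that(2) by blast
      then show False using z coh_zero[OF cM] by simp
    qed
    have ce: "coherent (ext D (M \<inter> ?L))" by (rule ext_coherent[OF cD pL disj])
    obtain M' where M': "M' \<in> atoms" "ext D (M \<inter> ?L) \<subseteq> M'" using zorn_atom[OF ce] by blast
    have "D \<subseteq> M'" "M \<inter> ?L \<subseteq> M'"
      using M'(2) ext_sub(1)[OF coherent_pcone[OF cD]] ext_sub(2)[OF pL] by blast+
    then have "\<exists>M'\<in>atoms. D \<subseteq> M' \<and> (\<exists>N\<in>atoms. N \<inter> ?L \<subseteq> M \<and> N \<inter> ?L \<subseteq> M')"
      using M'(1) M(1) by blast
    then show "M \<in> {M \<in> atoms. \<exists>M'\<in>atoms. D \<subseteq> M' \<and> (\<exists>N\<in>atoms. N \<inter> ?L \<subseteq> M \<and> N \<inter> ?L \<subseteq> M')}"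
      using M(1) by blast
  next
    fix M assume "M \<in> {M \<in> atoms. \<exists>M'\<in>atoms. D \<subseteq> M' \<and> (\<exists>N\<in>atoms. N \<inter> ?L \<subseteq> M \<and> N \<inter> ?L \<subseteq> M')}"
    then obtain M' N where M: "M \<in> atoms" "M' \<in> atoms" "D \<subseteq> M'" "N \<in> atoms" "N \<inter> ?L \<subseteq> M" "N \<inter> ?L \<subseteq> M'"
      by blast
    have cM': "coherent M'" using M(2) by (rule atoms_coh)
    have "D \<inter> ?L \<subseteq> M"
    proof
      fix f assume f: "f \<in> D \<inter> ?L"
      have fM': "f \<in> M'" using f M(3) by blast
      have fg: "f \<in> gambles" "f \<noteq> (\<lambda>w. 0)" using fM' coh_gambles[OF cM'] coh_zero[OF cM'] by blast+
      have "f \<in> N"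
      proof (rule ccontr)
        assume "f \<notin> N"
        then have "(\<lambda>w. - f w) \<in> N" using atom_max[OF M(4) fg] by blast
        moreover have "(\<lambda>w. - f w) \<in> ?L" using f meas_neg by blast
        ultimately have "(\<lambda>w. - f w) \<in> M'" using M(6) by blast
        then have "(\<lambda>w. f w + - f w) \<in> M'" using fM' coh_add[OF cM'] by blast
        then show False using coh_zero[OF cM'] by simp
      qed
      then show "f \<in> M" using f M(5) by blast
    qed
    then show "M \<in> {M \<in> atoms. D \<inter> ?L \<subseteq> M}" using M(1) by blast
  qed
qed

end
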